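(* Let $a,b\ge1$, $\nu$ a permutation of $[a]$, and $x\in[a]\times[b]$. Let $A(i,j)=(a+1-i,\,b+1-j)$, and for $I\in J(\mathcal{Q}_{a,b})$ let $\mathbf{1}_I$ be the indicator function of $I$. Then $h(I)=\mathbf{1}_I(x)-\big(1-\mathbf{1}_I(A(x))\big)$ is $0$-mesic for $\mathcal{T}_\nu$ acting on $J(\mathcal{Q}_{a,b})$; that is, along every orbit the number of ideals containing $x$ equals the number of ideals not containing $A(x)$.
   Context: $J(P)$ is the set of order ideals of a finite poset $P$. Toggle: $\sigma_x(I)=I\cup\{x\}$ if $x\notin I$ and $I\cup\{x\}\in J(P)$; $I\setminus\{x\}$ if $x\in I$ and $I\setminus\{x\}\in J(P)$; $I$ otherwise. For a chain $C=\{x_1<\dots<x_m\}$, $\sigma_C=\sigma_{x_1}\circ\cdots\circ\sigma_{x_m}$. $\mathcal{Q}_{a,b}=[a]\times[b]$ with componentwise order; columns $C_c=\{(c,j): j\in[b]\}$; comotion $\mathcal{T}_\nu=\sigma_{C_{\nu(a)}}\circ\cdots\circ\sigma_{C_{\nu(1)}}$. A function is $0$-mesic for a permutation $\tau$ of a finite set if its average over every $\tau$-orbit is $0$. *)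

theory Defs
  imports Complex_Main "HOL-Combinatorics.Permutations"
begin

definition Q :: "nat \<Rightarrow> nat \<Rightarrow> (nat \<times> nat) set" where
  "Q a b = {1..a} \<times> {1..b}"

definition qle :: "nat \<times> nat \<Rightarrow> nat \<times> nat \<Rightarrow> bool" where
  "qle x y \<longleftrightarrow> fst x \<le> fst y \<and> snd x \<le> snd y"

definition is_ideal :: "nat \<Rightarrow> nat \<Rightarrow> (nat \<times> nat) set \<Rightarrow> bool" where
  "is_ideal a b I \<longleftrightarrow> I \<subseteq> Q a b \<and>
     (\<forall>x\<in>I. \<forall>y\<in>Q a b. qle y x \<longrightarrow> y \<in> I)"

definition J :: "nat \<Rightarrow> nat \<Rightarrow> (nat \<times> nat) set set" where
  "J a b = {I. is_ideal a b I}"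

definition toggle :: "nat \<Rightarrow> nat \<Rightarrow> nat \<times> nat \<Rightarrow> (nat \<times> nat) set \<Rightarrow> (nat \<times> nat) set" where
  "toggle a b x I =
     (if x \<notin> I \<and> is_ideal a b (insert x I) then insert x I
      else if x \<in> I \<and> is_ideal a b (I - {x}) then I - {x}
      else I)"

definition toggle_chain :: "nat \<Rightarrow> nat \<Rightarrow> (nat \<times> nat) list \<Rightarrow> (nat \<times> nat) set \<Rightarrow> (nat \<times> nat) set" where
  "toggle_chain a b xs = foldr (\<lambda>x f. toggle a b x \<circ> f) xs id"

definition col_toggle :: "nat \<Rightarrow> nat \<Rightarrow> nat \<Rightarrow> (nat \<times> nat) set \<Rightarrow> (nat \<times> nat) set" where
  "col_toggle a b c = toggle_chain a b (map (\<lambda>j. (c, j)) [1..<b+1])"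

(* comotion T_nu = sigma_{C_nu(a)} o ... o sigma_{C_nu(1)} *)
definition comotion :: "nat \<Rightarrow> nat \<Rightarrow> (nat \<Rightarrow> nat) \<Rightarrow> (nat \<times> nat) set \<Rightarrow> (nat \<times> nat) set" where
  "comotion a b nu = foldr (\<lambda>c f. col_toggle a b (nu c) \<circ> f) (rev [1..<a+1]) id"

definition orbit_of :: "('s \<Rightarrow> 's) \<Rightarrow> 's \<Rightarrow> 's set" where
  "orbit_of T s = {(T ^^ k) s | k. True}"

definition zero_mesic :: "('s \<Rightarrow> 's) \<Rightarrow> 's set \<Rightarrow> ('s \<Rightarrow> real) \<Rightarrow> bool" where
  "zero_mesic T S h \<longleftrightarrow>
     (\<forall>s\<in>S. (\<Sum>t\<in>orbit_of T s. h t) / real (card (orbit_of T s)) = 0)"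

definition antipode :: "nat \<Rightarrow> nat \<Rightarrow> nat \<times> nat \<Rightarrow> nat \<times> nat" where
  "antipode a b x = (a + 1 - fst x, b + 1 - snd x)"

definition ind :: "'x set \<Rightarrow> 'x \<Rightarrow> real" where
  "ind I x = (if x \<in> I then 1 else 0)"

end

theory Submission
  imports Defs "HOL-Combinatorics.Permutations"
begin

definition valid :: "nat \<Rightarrow> nat \<Rightarrow> (nat \<Rightarrow> nat) \<Rightarrow> bool" where
"valid a b h \<longleftrightarrow> (\<forall>c. (c = 0 \<or> a < c) \<longrightarrow> h c = 0) \<and> (\<forall>c. h c \<le> b) \<and>
   (\<forall>c d. 1 \<le> c \<longrightarrow> c \<le> d \<longrightarrow> d \<le> a \<longrightarrow> h d \<le> h c)"

definition hset :: "nat \<Rightarrow> (nat \<Rightarrow> nat) \<Rightarrow> (nat \<times> nat) set" where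
"hset a h = {(c,j). 1 \<le> c \<and> c \<le> a \<and> 1 \<le> j \<and> j \<le> h c}"

lemma hset_mem[simp]: "(c,j) \<in> hset a h \<longleftrightarrow> 1 \<le> c \<and> c \<le> a \<and> 1 \<le> j \<and> j \<le> h c"
  by (simp add: hset_def)

lemma validD0: "valid a b h \<Longrightarrow> c = 0 \<Longrightarrow> h c = 0" by (simp add: valid_def)
lemma validDa: "valid a b h \<Longrightarrow> a < c \<Longrightarrow> h c = 0" by (simp add: valid_def)
lemma validDb: "valid a b h \<Longrightarrow> h c \<le> b" by (simp add: valid_def)
lemma validDm: "valid a b h \<Longrightarrow> 1 \<le> c \<Longrightarrow> c \<le> d \<Longrightarrow> d \<le> a \<Longrightarrow> h d \<le> h c"
  unfolding valid_def by blast
lemmas validD = validD0 validDa validDb validDm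

lemma valid_ideal:
  assumes v: "valid a b h" shows "is_ideal a b (hset a h)"
  unfolding is_ideal_def
proof (intro conjI ballI impI)
  show "hset a h \<subseteq> Q a b"
  proof
    fix x assume "x \<in> hset a h"
    then obtain c j where "x=(c,j)" "1\<le>c" "c\<le>a" "1\<le>j" "j \<le> h c" by (cases x) auto
    moreover have "h c \<le> b" by (rule validD(3)[OF v])
    ultimately show "x \<in> Q a b" by (simp add: Q_def)
  qed
next
  fix x y assume x: "x \<in> hset a h" and y: "y \<in> Q a b" and le: "qle y x"
  obtain c j where xc: "x = (c,j)" by (cases x)
  obtain c' j' where yc: "y = (c',j')" by (cases y)
  from x y le xc yc have "1 \<le> c'" "c' \<le> c" "c \<le> a" "1 \<le> j'" "j' \<le> j" "j \<le> h c"
    by (auto simp: Q_def qle_def)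
  then have "h c \<le> h c'" using validD(4)[OF v, of c' c] by blast
  then show "y \<in> hset a h" using yc \<open>1 \<le> c'\<close> \<open>c' \<le> c\<close> \<open>c \<le> a\<close> \<open>1 \<le> j'\<close> \<open>j' \<le> j\<close> \<open>j \<le> h c\<close> by simp
qed

lemma dc_interval:
  assumes sub: "A \<subseteq> {1..(n::nat)}" and dc: "\<forall>x\<in>A. \<forall>y. 1 \<le> y \<longrightarrow> y \<le> x \<longrightarrow> y \<in> A"
  shows "A = {1..card A}"
proof -
  have fin: "finite A" using sub finite_subset by blast
  have 1: "k \<in> A \<Longrightarrow> 1 \<le> k \<and> k \<le> card A" for k
  proof -
    assume k: "k \<in> A"
    then have "{1..k} \<subseteq> A" using dc by auto
    then have "card {1..k} \<le> card A" using fin card_mono by blast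
    then show "1 \<le> k \<and> k \<le> card A" using k sub by auto
  qed
  have 2: "1 \<le> k \<Longrightarrow> k \<le> card A \<Longrightarrow> k \<in> A" for k
  proof (rule ccontr)
    assume k: "1 \<le> k" "k \<le> card A" and "k \<notin> A"
    have "A \<subseteq> {1..<k}"
    proof
      fix x assume x: "x \<in> A"
      then have "1 \<le> x" using sub by auto
      moreover have "x < k"
      proof (rule ccontr)
        assume "\<not> x < k"
        then have "k \<le> x" by simp
        then show False using dc x k \<open>k \<notin> A\<close> by blast
      qed
      ultimately show "x \<in> {1..<k}" by simp
    qed
    then have "card A \<le> card {1..<k}" by (rule card_mono[rotated]) simp
    then show False using k by (simp only: card_atLeastLessThan)
  qed
  show ?thesis
  proof (rule set_eqI)
    fix k show "k \<in> A \<longleftrightarrow> k \<in> {1..card A}" using 1[of k] 2[of k] by (simp only: atLeastAtMost_iff) blast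
  qed
qed

lemma ideal_hset:
  assumes I: "is_ideal a b I" shows "\<exists>h. valid a b h \<and> I = hset a h"
proof -
  define A where "A c = {j. (c,j) \<in> I}" for c
  define h where "h c = (if 1 \<le> c \<and> c \<le> a then card (A c) else 0)" for c
  have IQ: "I \<subseteq> Q a b" and dI: "\<And>x y. x \<in> I \<Longrightarrow> y \<in> Q a b \<Longrightarrow> qle y x \<Longrightarrow> y \<in> I"
    using I unfolding is_ideal_def by blast+
  have Asub: "A c \<subseteq> {1..b}" for c using IQ by (auto simp: A_def Q_def)
  have Adc: "\<forall>x\<in>A c. \<forall>y. 1 \<le> y \<longrightarrow> y \<le> x \<longrightarrow> y \<in> A c" for c
  proof (intro ballI allI impI)
    fix x y assume "x \<in> A c" "1 \<le> y" "y \<le> x"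
    then have "(c,x) \<in> I" "(c,y) \<in> Q a b" using IQ by (auto simp: A_def Q_def)
    then show "y \<in> A c" using dI[of "(c,x)" "(c,y)"] \<open>y \<le> x\<close> by (auto simp: A_def qle_def)
  qed
  have Aeq: "A c = {1..card (A c)}" for c using dc_interval[OF Asub Adc] .
  have Amem: "j \<in> A c \<longleftrightarrow> 1 \<le> j \<and> j \<le> card (A c)" for j c
    by (subst Aeq) (simp only: atLeastAtMost_iff)
  have "valid a b h"
    unfolding valid_def
  proof (intro conjI allI impI)
    fix c assume "c = 0 \<or> a < c" then show "h c = 0" by (auto simp: h_def)
  next
    fix c show "h c \<le> b"
      using card_mono[OF _ Asub[of c]] by (auto simp: h_def)
  next
    fix c d assume cd: "1 \<le> c" "c \<le> d" "d \<le> a"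
    have "A d \<subseteq> A c"
    proof
      fix j assume "j \<in> A d"
      then have "(d,j) \<in> I" "(c,j) \<in> Q a b" using IQ cd by (auto simp: A_def Q_def)
      then show "j \<in> A c" using dI[of "(d,j)" "(c,j)"] cd by (auto simp: A_def qle_def)
    qed
    then show "h d \<le> h c" using cd card_mono[OF finite_subset[OF Asub[of c]]] by (auto simp: h_def)
  qed
  moreover have "I = hset a h"
  proof (rule set_eqI)
    fix x :: "nat \<times> nat" obtain c j where x: "x = (c,j)" by (cases x)
    have "x \<in> I \<longleftrightarrow> (1 \<le> c \<and> c \<le> a) \<and> j \<in> A c" using IQ x by (auto simp: A_def Q_def)
    also have "\<dots> \<longleftrightarrow> x \<in> hset a h" using Amem[of j c] x by (auto simp: h_def)
    finally show "x \<in> I \<longleftrightarrow> x \<in> hset a h" .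
  qed
  ultimately show ?thesis by blast
qed

lemma hset_inj:
  assumes v: "valid a b h" and v': "valid a b h'" and eq: "hset a h = hset a h'"
  shows "h = h'"
proof
  fix c show "h c = h' c"
  proof (cases "1 \<le> c \<and> c \<le> a")
    case False then show ?thesis using validD(1,2)[OF v] validD(1,2)[OF v'] by (cases "c = 0") auto
  next
    case True
    show ?thesis
    proof (rule ccontr)
      assume ne: "h c \<noteq> h' c"
      show False
      proof (cases "h c < h' c")
        case True
        then have "(c, h' c) \<in> hset a h'" "(c, h' c) \<notin> hset a h" using \<open>1 \<le> c \<and> c \<le> a\<close> by auto
        then show False using eq by simp
      next
        case False
        then have "h' c < h c" using ne by simp
        then have "(c, h c) \<in> hset a h" "(c, h c) \<notin> hset a h'" using \<open>1 \<le> c \<and> c \<le> a\<close> by auto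
        then show False using eq by simp
      qed
    qed
  qed
qed

lemma hset_insert:
  assumes "1 \<le> c" "c \<le> a" "1 \<le> j" "h c = j - 1"
  shows "insert (c,j) (hset a h) = hset a (h(c := j))"
proof (rule set_eqI)
  fix x :: "nat \<times> nat"
  obtain c' j' where x: "x = (c',j')" by (cases x)
  show "x \<in> insert (c,j) (hset a h) \<longleftrightarrow> x \<in> hset a (h(c := j))"
    using assms unfolding x by (cases "c' = c") auto
qed

lemma hset_remove:
  assumes "1 \<le> j" "h c = j"
  shows "hset a h - {(c,j)} = hset a (h(c := j - 1))"
proof (rule set_eqI)
  fix x :: "nat \<times> nat"
  obtain c' j' where x: "x = (c',j')" by (cases x)
  show "x \<in> hset a h - {(c,j)} \<longleftrightarrow> x \<in> hset a (h(c := j - 1))"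
    using assms unfolding x by (cases "c' = c") auto
qed

lemma valid_upd:
  assumes v: "valid a b h" and c: "1 \<le> c" "c \<le> a" and vb: "w \<le> b"
    and up: "c = 1 \<or> w \<le> h (c-1)" and lo: "c = a \<or> h (c+1) \<le> w"
  shows "valid a b (h(c := w))"
  unfolding valid_def
proof (intro conjI allI impI)
  fix d assume "d = 0 \<or> a < d"
  then show "(h(c := w)) d = 0" using c validD(1,2)[OF v] by auto
next
  fix d show "(h(c := w)) d \<le> b" using vb validD(3)[OF v] by simp
next
  fix c1 d assume cd: "1 \<le> c1" "c1 \<le> d" "d \<le> a"
  show "(h(c := w)) d \<le> (h(c := w)) c1"
  proof (cases "d = c")
    case True
    show ?thesis
    proof (cases "c1 = c")
      case False
      then have "c1 \<le> c - 1" "c \<noteq> 1" using cd True by auto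
      then have "h (c-1) \<le> h c1" using validDm[OF v, of c1 "c-1"] cd True by simp
      then show ?thesis using up \<open>c \<noteq> 1\<close> True False by simp
    qed (simp add: True)
  next
    case dF: False
    show ?thesis
    proof (cases "c1 = c")
      case True
      then have "c + 1 \<le> d" "c \<noteq> a" using cd dF by auto
      then have "h d \<le> h (c+1)" using validDm[OF v, of "c+1" d] cd by simp
      then show ?thesis using lo \<open>c \<noteq> a\<close> True dF by simp
    next
      case False
      then show ?thesis using dF validDm[OF v, of c1 d] cd by simp
    qed
  qed
qed

lemma add_cond:
  assumes v: "valid a b h" and c: "1 \<le> c" "c \<le> a" and j: "1 \<le> j" "j \<le> b"
  shows "((c,j) \<notin> hset a h \<and> is_ideal a b (insert (c,j) (hset a h))) \<longleftrightarrow>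
         (h c = j - 1 \<and> (c = 1 \<or> j \<le> h (c-1)))"
proof
  assume A: "(c,j) \<notin> hset a h \<and> is_ideal a b (insert (c,j) (hset a h))"
  then have hc: "h c < j" using c j by auto
  have dI: "\<And>x y. x \<in> insert (c,j) (hset a h) \<Longrightarrow> y \<in> Q a b \<Longrightarrow> qle y x \<Longrightarrow> y \<in> insert (c,j) (hset a h)"
    using A unfolding is_ideal_def by blast
  have "h c = j - 1"
  proof (cases "j = 1")
    case True then show ?thesis using hc by simp
  next
    case False
    then have "(c, j-1) \<in> Q a b" "qle (c,j-1) (c,j)" using c j by (auto simp: Q_def qle_def)
    then have "(c, j-1) \<in> insert (c,j) (hset a h)" using dI by blast
    then have "j - 1 \<le> h c" using False by auto
    then show ?thesis using hc by simp
  qed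
  moreover have "c = 1 \<or> j \<le> h (c-1)"
  proof (cases "c = 1")
    case False
    then have "(c-1, j) \<in> Q a b" "qle (c-1,j) (c,j)" using c j by (auto simp: Q_def qle_def)
    then have "(c-1, j) \<in> insert (c,j) (hset a h)" using dI by blast
    then have "j \<le> h (c-1)" using False c by auto
    then show ?thesis by simp
  qed simp
  ultimately show "h c = j - 1 \<and> (c = 1 \<or> j \<le> h (c-1))" by simp
next
  assume B: "h c = j - 1 \<and> (c = 1 \<or> j \<le> h (c-1))"
  then have "(c,j) \<notin> hset a h" using j by auto
  moreover have "valid a b (h(c := j))"
  proof (rule valid_upd[OF v c j(2)])
    show "c = 1 \<or> j \<le> h (c-1)" using B by simp
    show "c = a \<or> h (c+1) \<le> j"
    proof (cases "c = a")
      case False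
      then have "h (c+1) \<le> h c" using validDm[OF v, of c "c+1"] c by simp
      then show ?thesis using B by (intro disjI2) arith
    qed simp
  qed
  then have "is_ideal a b (insert (c,j) (hset a h))"
    using hset_insert[OF c j(1)] B valid_ideal by simp
  ultimately show "(c,j) \<notin> hset a h \<and> is_ideal a b (insert (c,j) (hset a h))" by simp
qed

lemma rem_cond:
  assumes v: "valid a b h" and c: "1 \<le> c" "c \<le> a" and j: "1 \<le> j" "j \<le> b"
  shows "((c,j) \<in> hset a h \<and> is_ideal a b (hset a h - {(c,j)})) \<longleftrightarrow>
         (h c = j \<and> (c = a \<or> h (c+1) < j))"
proof
  assume A: "(c,j) \<in> hset a h \<and> is_ideal a b (hset a h - {(c,j)})"
  then have hc: "j \<le> h c" using c j by auto
  have dI: "\<And>x y. x \<in> hset a h - {(c,j)} \<Longrightarrow> y \<in> Q a b \<Longrightarrow> qle y x \<Longrightarrow> y \<in> hset a h - {(c,j)}"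
    using A unfolding is_ideal_def by blast
  have cQ: "(c,j) \<in> Q a b" using c j by (simp add: Q_def)
  have "h c = j"
  proof (rule ccontr)
    assume "h c \<noteq> j"
    then have "(c, j+1) \<in> hset a h - {(c,j)}" using hc c j by auto
    moreover have "qle (c,j) (c,j+1)" by (simp add: qle_def)
    ultimately have "(c,j) \<in> hset a h - {(c,j)}" using dI cQ by blast
    then show False by simp
  qed
  moreover have "c = a \<or> h (c+1) < j"
  proof (rule ccontr)
    assume "\<not> (c = a \<or> h (c+1) < j)"
    then have "c + 1 \<le> a" "j \<le> h (c+1)" using c by auto
    then have "(c+1, j) \<in> hset a h - {(c,j)}" using c j by auto
    moreover have "qle (c,j) (c+1,j)" by (simp add: qle_def)
    ultimately have "(c,j) \<in> hset a h - {(c,j)}" using dI cQ by blast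
    then show False by simp
  qed
  ultimately show "h c = j \<and> (c = a \<or> h (c+1) < j)" by simp
next
  assume B: "h c = j \<and> (c = a \<or> h (c+1) < j)"
  then have "(c,j) \<in> hset a h" using c j by auto
  moreover have "valid a b (h(c := j - 1))"
  proof (rule valid_upd[OF v c])
    show "j - 1 \<le> b" using j by simp
    show "c = 1 \<or> j - 1 \<le> h (c-1)"
    proof (cases "c = 1")
      case False
      then have "h c \<le> h (c-1)" using validDm[OF v, of "c-1" c] c by simp
      then show ?thesis using B by (intro disjI2) arith
    qed simp
    show "c = a \<or> h (c+1) \<le> j - 1" using B by auto
  qed
  then have "is_ideal a b (hset a h - {(c,j)})"
    using hset_remove[OF j(1)] B valid_ideal by simp
  ultimately show "(c,j) \<in> hset a h \<and> is_ideal a b (hset a h - {(c,j)})" by simp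
qed

lemma toggle_hset:
  assumes v: "valid a b h" and c: "1 \<le> c" "c \<le> a" and j: "1 \<le> j" "j \<le> b"
  shows "toggle a b (c,j) (hset a h) =
    (if h c = j - 1 \<and> (c = 1 \<or> j \<le> h (c-1)) then hset a (h(c := j))
     else if h c = j \<and> (c = a \<or> h (c+1) < j) then hset a (h(c := j - 1))
     else hset a h)"
proof -
  note A = add_cond[OF v c j] and R = rem_cond[OF v c j]
  show ?thesis
  proof (cases "h c = j - 1 \<and> (c = 1 \<or> j \<le> h (c-1))")
    case True
    then show ?thesis using A hset_insert[OF c j(1)] unfolding toggle_def by simp
  next
    case F1: False
    show ?thesis
    proof (cases "h c = j \<and> (c = a \<or> h (c+1) < j)")
      case True
      then show ?thesis using A R F1 hset_remove[OF j(1)] unfolding toggle_def by simp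
    next
      case False
      then show ?thesis using A R F1 unfolding toggle_def by auto
    qed
  qed
qed

definition Up :: "nat \<Rightarrow> (nat \<Rightarrow> nat) \<Rightarrow> nat \<Rightarrow> nat" where
  "Up b h c = (if c = 1 then b else h (c-1))"

definition rot :: "nat \<Rightarrow> nat \<Rightarrow> (nat \<Rightarrow> nat) \<Rightarrow> (nat \<Rightarrow> nat)" where
  "rot b c h = h(c := if h c < Up b h c then h c + 1 else h (c+1))"

lemma Up_ge:
  assumes v: "valid a b h" and c: "1 \<le> c" "c \<le> a"
  shows "h c \<le> Up b h c" "Up b h c \<le> b"
proof -
  show "h c \<le> Up b h c"
  proof (cases "c = 1")
    case True then show ?thesis using validDb[OF v] by (simp add: Up_def)
  next
    case False then show ?thesis using validDm[OF v, of "c-1" c] c by (simp add: Up_def)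
  qed
  show "Up b h c \<le> b" using validDb[OF v] by (simp add: Up_def)
qed

lemma lo_le:
  assumes v: "valid a b h" and c: "1 \<le> c" "c \<le> a"
  shows "h (c+1) \<le> h c"
proof (cases "c = a")
  case True then show ?thesis using validDa[OF v, of "c+1"] by simp
next
  case False then show ?thesis using validDm[OF v, of c "c+1"] c by simp
qed

lemma valid_rot:
  assumes v: "valid a b h" and c: "1 \<le> c" "c \<le> a"
  shows "valid a b (rot b c h)"
proof (cases "h c < Up b h c")
  case True
  have "valid a b (h(c := h c + 1))"
  proof (rule valid_upd[OF v c])
    show "h c + 1 \<le> b" using True Up_ge[OF v c] by simp
    show "c = 1 \<or> h c + 1 \<le> h (c - 1)" using True by (cases "c = 1") (auto simp: Up_def)
    show "c = a \<or> h (c + 1) \<le> h c + 1" using lo_le[OF v c] by simp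
  qed
  then show ?thesis using True by (simp add: rot_def)
next
  case False
  have "valid a b (h(c := h (c+1)))"
  proof (rule valid_upd[OF v c])
    show "h (c+1) \<le> b" using validDb[OF v] .
    show "c = 1 \<or> h (c+1) \<le> h (c - 1)"
    proof (cases "c = 1")
      case False
      then have "h c \<le> h (c-1)" using validDm[OF v, of "c-1" c] c by simp
      then show ?thesis using lo_le[OF v c] by (intro disjI2) arith
    qed simp
    show "c = a \<or> h (c + 1) \<le> h (c+1)" by simp
  qed
  then show ?thesis using False by (simp add: rot_def)
qed

definition ch :: "nat \<Rightarrow> nat \<Rightarrow> nat \<Rightarrow> nat \<Rightarrow> (nat \<times> nat) set \<Rightarrow> (nat \<times> nat) set" where
  "ch a b c m = foldr (\<lambda>x f. toggle a b x \<circ> f) (map (\<lambda>j. (c, j)) [m..<b+1]) id"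

lemma ch_step: assumes "m \<le> b" shows "ch a b c m X = toggle a b (c,m) (ch a b c (Suc m) X)"
proof -
  have "[m..<b+1] = m # [Suc m..<b+1]" by (rule upt_conv_Cons) (use assms in simp)
  then show ?thesis unfolding ch_def by simp
qed

lemma ch_end: "ch a b c (b+1) X = X"
  by (simp add: ch_def)

lemma col_toggle_ch: "col_toggle a b c = ch a b c 1"
  by (simp add: col_toggle_def toggle_chain_def ch_def)

lemma ch_const:
  assumes "lo \<le> hi" "hi \<le> b+1" "ch a b c hi X = Y"
    and "\<And>m. lo \<le> m \<Longrightarrow> m < hi \<Longrightarrow> toggle a b (c,m) Y = Y"
  shows "ch a b c lo X = Y"
  using assms(1)
proof (induction rule: inc_induct)
  case base then show ?case using assms(3) .
next
  case (step n)
  then have "n \<le> b" using assms(2) by simp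
  then show ?case using ch_step[of n b a c X] step assms(4)[of n] by simp
qed

lemma col_toggle_hset:
  assumes v: "valid a b h" and c: "1 \<le> c" "c \<le> a"
  shows "col_toggle a b c (hset a h) = hset a (rot b c h)"
proof -
  note tg = toggle_hset[OF _ c]
  have hU: "h c \<le> Up b h c" "Up b h c \<le> b" using Up_ge[OF v c] by auto
  have hL: "h (c+1) \<le> h c" using lo_le[OF v c] .
  show ?thesis
  proof (cases "h c < Up b h c")
    case True
    define h' where "h' = h(c := h c + 1)"
    have v': "valid a b h'" using valid_rot[OF v c] True by (simp add: rot_def h'_def)
    have A1: "ch a b c (h c + 2) (hset a h) = hset a h"
    proof (rule ch_const)
      show "h c + 2 \<le> b + 1" using True hU by simp
      show "ch a b c (b+1) (hset a h) = hset a h" by (rule ch_end)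
      fix m assume m: "h c + 2 \<le> m" "m < b + 1"
      then have "h c \<noteq> m - 1" "h c \<noteq> m" "1 \<le> m" "m \<le> b" by auto
      then show "toggle a b (c,m) (hset a h) = hset a h" using tg[OF v, of m] by simp
    qed simp
    have A2: "ch a b c (h c + 1) (hset a h) = hset a h'"
    proof -
      have "h c + 1 \<le> b" using True hU by simp
      then have "ch a b c (h c + 1) (hset a h) = toggle a b (c, h c + 1) (hset a h)"
        using ch_step[of "h c + 1" b a c] A1 by simp
      also have "\<dots> = hset a h'"
        using tg[OF v, of "h c + 1"] True \<open>h c + 1 \<le> b\<close> by (auto simp: h'_def Up_def split: if_splits)
      finally show ?thesis .
    qed
    have A3: "ch a b c 1 (hset a h) = hset a h'"
    proof (rule ch_const)
      show "h c + 1 \<le> b + 1" using True hU by simp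
      show "ch a b c (h c + 1) (hset a h) = hset a h'" by (rule A2)
      fix m assume m: "1 \<le> m" "m < h c + 1"
      have "m \<le> b" using m hU by simp
      moreover have "h' c \<noteq> m - 1" "h' c \<noteq> m" using m by (auto simp: h'_def)
      ultimately show "toggle a b (c,m) (hset a h') = hset a h'" using tg[OF v', of m] m by simp
    qed simp
    then show ?thesis using True by (simp add: col_toggle_ch rot_def h'_def)
  next
    case False
    then have hc: "h c = Up b h c" using hU by simp
    define h'' where "h'' = h(c := h (c+1))"
    have v'': "valid a b h''" using valid_rot[OF v c] False by (simp add: rot_def h''_def)
    have B1: "ch a b c (h c + 1) (hset a h) = hset a h"
    proof (rule ch_const)
      show "h c + 1 \<le> b + 1" using hU by simp
      show "ch a b c (b+1) (hset a h) = hset a h" by (rule ch_end)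
      fix m assume m: "h c + 1 \<le> m" "m < b + 1"
      have "\<not> (h c = m - 1 \<and> (c = 1 \<or> m \<le> h (c-1)))"
      proof
        assume *: "h c = m - 1 \<and> (c = 1 \<or> m \<le> h (c-1))"
        show False
        proof (cases "c = 1")
          case True then show False using * hc m by (simp add: Up_def)
        next
          case False then show False using * hc m by (simp add: Up_def)
        qed
      qed
      note n1 = this
      have n2: "\<not> (h c = m \<and> (c = a \<or> h (c + 1) < m))" using m by auto
      have "1 \<le> m" "m \<le> b" using m by auto
      then have T: "toggle a b (c,m) (hset a h) = (if h c = m - 1 \<and> (c = 1 \<or> m \<le> h (c - 1)) then hset a (h(c := m))
         else if h c = m \<and> (c = a \<or> h (c + 1) < m) then hset a (h(c := m - 1)) else hset a h)"
        using tg[OF v, of m] by blast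
      show "toggle a b (c,m) (hset a h) = hset a h" by (simp only: T if_not_P[OF n1] if_not_P[OF n2])
    qed simp
    have B2: "ch a b c m (hset a h) = hset a (h(c := m - 1))" if m: "h (c+1) + 1 \<le> m" "m \<le> h c + 1" for m
      using m(2,1)
    proof (induction rule: inc_induct)
      case base then show ?case using B1 by simp
    next
      case (step n)
      have nL: "h (c+1) + 1 \<le> n" using step(1) m(1) by simp
      define g where "g = h(c := n)"
      have nb: "n \<le> b" using step(2) hU by simp
      have n1: "1 \<le> n" using nL by simp
      have vg: "valid a b g" unfolding g_def
      proof (rule valid_upd[OF v c nb])
        show "c = 1 \<or> n \<le> h (c - 1)"
        proof (cases "c = 1")
          case False then show ?thesis using hc step(2) by (simp add: Up_def)
        qed simp
        show "c = a \<or> h (c + 1) \<le> n" using nL by simp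
      qed
      have "ch a b c (Suc n) (hset a h) = hset a (h(c := Suc n - 1))" by (rule step(3)) (use nL in simp)
      then have IH: "ch a b c (Suc n) (hset a h) = hset a g" by (simp add: g_def)
      have "ch a b c n (hset a h) = toggle a b (c,n) (hset a g)" using ch_step[OF nb, of a c] IH by simp
      also have "\<dots> = hset a (g(c := n - 1))"
        using tg[OF vg n1 nb] nL n1 by (simp add: g_def)
      finally have "ch a b c n (hset a h) = hset a (h(c := n - 1))" by (simp add: g_def)
      then show ?case unfolding fun_upd_def by simp
    qed
    have B3: "ch a b c 1 (hset a h) = hset a h''"
    proof (rule ch_const)
      show "h (c+1) + 1 \<le> b + 1" using hU hL by simp
      show "ch a b c (h (c+1) + 1) (hset a h) = hset a h''" using B2[of "h (c+1) + 1"] hL by (simp add: h''_def)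
      fix m assume m: "1 \<le> m" "m < h (c+1) + 1"
      have mb: "m \<le> b" using m hU hL by simp
      have "c \<noteq> a" using m validDa[OF v, of "c+1"] by auto
      have n1: "\<not> (h'' c = m - 1 \<and> (c = 1 \<or> m \<le> h'' (c - 1)))" using m by (auto simp: h''_def)
      have n2: "\<not> (h'' c = m \<and> (c = a \<or> h'' (c + 1) < m))" using m \<open>c \<noteq> a\<close> by (simp add: h''_def)
      show "toggle a b (c,m) (hset a h'') = hset a h''" by (simp only: tg[OF v'' m(1) mb] if_not_P[OF n1] if_not_P[OF n2])
    qed simp
    then show ?thesis using False by (simp add: col_toggle_ch rot_def h''_def)
  qed
qed

lemma foldr_comp_id: "foldr (\<lambda>c f. G c \<circ> f) xs g = foldr (\<lambda>c f. G c \<circ> f) xs id \<circ> g"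
  by (induction xs) auto

lemma foldr_rev_fold: "foldr (\<lambda>c f. G c \<circ> f) (rev xs) id X = fold G xs X"
proof (induction xs arbitrary: X)
  case Nil then show ?case by simp
next
  case (Cons x xs)
  have "foldr (\<lambda>c f. G c \<circ> f) (rev (x # xs)) id X = foldr (\<lambda>c f. G c \<circ> f) (rev xs) (G x \<circ> id) X"
    by simp
  also have "\<dots> = foldr (\<lambda>c f. G c \<circ> f) (rev xs) id (G x X)"
    by (subst foldr_comp_id) simp
  also have "\<dots> = fold G xs (G x X)" by (rule Cons.IH)
  also have "\<dots> = fold G (x # xs) X" by simp
  finally show ?case .
qed

definition Tw :: "nat \<Rightarrow> nat list \<Rightarrow> (nat \<Rightarrow> nat) \<Rightarrow> (nat \<Rightarrow> nat)" where
  "Tw b w = fold (rot b) w"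

lemma valid_Tw: "valid a b h \<Longrightarrow> set w \<subseteq> {1..a} \<Longrightarrow> valid a b (Tw b w h)"
  unfolding Tw_def
proof (induction w arbitrary: h)
  case (Cons c w) then show ?case using valid_rot[of a b h c] by auto
qed simp

lemma fold_col_hset:
  "valid a b h \<Longrightarrow> set w \<subseteq> {1..a} \<Longrightarrow> fold (col_toggle a b) w (hset a h) = hset a (Tw b w h)"
  unfolding Tw_def
proof (induction w arbitrary: h)
  case (Cons c w)
  then have c: "1 \<le> c" "c \<le> a" by auto
  have "fold (col_toggle a b) (c # w) (hset a h) = fold (col_toggle a b) w (hset a (rot b c h))"
    using col_toggle_hset[OF Cons(2) c] by simp
  also have "\<dots> = hset a (fold (rot b) w (rot b c h))"
    using Cons valid_rot[OF Cons(2) c] by auto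
  finally show ?case by simp
qed simp

lemma comotion_hset:
  assumes v: "valid a b h" and nu: "nu ` {1..a} \<subseteq> {1..a}"
  shows "comotion a b nu (hset a h) = hset a (Tw b (map nu [1..<a+1]) h)"
proof -
  have "comotion a b nu (hset a h) = fold (\<lambda>c. col_toggle a b (nu c)) [1..<a+1] (hset a h)"
    unfolding comotion_def by (rule foldr_rev_fold)
  also have "\<dots> = fold (col_toggle a b) (map nu [1..<a+1]) (hset a h)"
    by (simp add: fold_map comp_def)
  also have "\<dots> = hset a (Tw b (map nu [1..<a+1]) h)"
    by (rule fold_col_hset[OF v]) (use nu in auto)
  finally show ?thesis .
qed

definition SP :: "nat \<Rightarrow> nat \<Rightarrow> ((nat \<Rightarrow> nat) \<Rightarrow> (nat \<Rightarrow> nat)) \<Rightarrow> ((nat \<Rightarrow> nat) \<Rightarrow> real) \<Rightarrow> bool" where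
  "SP a b T f \<longleftrightarrow> (\<forall>h. valid a b h \<longrightarrow> (\<forall>n. (T ^^ n) h = h \<longrightarrow> (\<Sum>k<n. f ((T ^^ k) h)) = 0))"

lemma sum_shift1:
  fixes q :: "nat \<Rightarrow> real"
  assumes "q n = q 0"
  shows "(\<Sum>k<n. q (Suc k)) = (\<Sum>k<n. q k)"
proof -
  have "(\<Sum>k<Suc n. q k) = q 0 + (\<Sum>k<n. q (Suc k))" by (rule sum.lessThan_Suc_shift)
  moreover have "(\<Sum>k<Suc n. q k) = (\<Sum>k<n. q k) + q n" by simp
  ultimately show ?thesis using assms by (simp add: add.commute)
qed

lemma sum_shift:
  fixes p :: "nat \<Rightarrow> real"
  assumes per: "\<And>k. p (k + n) = p k"
  shows "(\<Sum>k<n. p (k + K)) = (\<Sum>k<n. p k)"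
proof (induction K)
  case 0 then show ?case by simp
next
  case (Suc K)
  have "(\<Sum>k<n. p (k + Suc K)) = (\<Sum>k<n. (\<lambda>k. p (k + K)) (Suc k))" by simp
  also have "\<dots> = (\<Sum>k<n. p (k + K))"
    by (rule sum_shift1) (use per[of K] in \<open>simp add: add.commute\<close>)
  also have "\<dots> = (\<Sum>k<n. p k)" by (rule Suc)
  finally show ?case .
qed

lemma orbit_shift:
  fixes f :: "'s \<Rightarrow> real"
  assumes "(T ^^ n) h = h"
  shows "(\<Sum>k<n. f ((T ^^ (k + K)) h)) = (\<Sum>k<n. f ((T ^^ k) h))"
proof (rule sum_shift[where p = "\<lambda>k. f ((T ^^ k) h)"])
  fix k show "f ((T ^^ (k + n)) h) = f ((T ^^ k) h)" using assms by (simp add: funpow_add)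
qed

lemma SP_cob:
  assumes sp: "SP a b T f" and pres: "\<And>h. valid a b h \<Longrightarrow> valid a b (T h)"
    and eq: "\<And>h. valid a b h \<Longrightarrow> g h = f h + (\<psi> (T h) - \<psi> h)"
  shows "SP a b T g"
  unfolding SP_def
proof (intro allI impI)
  fix h n assume v: "valid a b h" and per: "(T ^^ n) h = h"
  have vk: "valid a b ((T ^^ k) h)" for k by (induction k) (auto simp: v pres)
  have "(\<Sum>k<n. g ((T ^^ k) h)) = (\<Sum>k<n. f ((T ^^ k) h)) + (\<Sum>k<n. \<psi> ((T ^^ Suc k) h) - \<psi> ((T ^^ k) h))"
    using eq[OF vk] by (simp add: sum.distrib)
  also have "(\<Sum>k<n. \<psi> ((T ^^ Suc k) h) - \<psi> ((T ^^ k) h)) = \<psi> ((T ^^ n) h) - \<psi> ((T ^^ 0) h)"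
    by (rule sum_lessThan_telescope[where f = "\<lambda>k. \<psi> ((T ^^ k) h)"])
  finally show "(\<Sum>k<n. g ((T ^^ k) h)) = 0" using sp v per unfolding SP_def by simp
qed

lemma SP_transfer:
  assumes sp: "SP a b T1 (\<lambda>h. f (A h))" and T1: "\<And>h. T1 h = B (A h)" and T2: "\<And>h. T2 h = A (B h)"
    and presB: "\<And>h. valid a b h \<Longrightarrow> valid a b (B h)"
  shows "SP a b T2 f"
  unfolding SP_def
proof (intro allI impI)
  fix h n assume v: "valid a b h" and per: "(T2 ^^ n) h = h"
  have comm: "(T1 ^^ k) (B h) = B ((T2 ^^ k) h)" for k
    by (induction k) (simp_all add: T1 T2)
  have "(T1 ^^ n) (B h) = B h" using comm[of n] per by simp
  then have "(\<Sum>k<n. f (A ((T1 ^^ k) (B h)))) = 0" using sp presB[OF v] unfolding SP_def by blast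
  then have "(\<Sum>k<n. f ((T2 ^^ (k + 1)) h)) = 0" by (simp add: comm T2)
  then show "(\<Sum>k<n. f ((T2 ^^ k) h)) = 0" using orbit_shift[OF per, of f 1] by simp
qed

lemma rot_other: "d \<noteq> c \<Longrightarrow> rot b c h d = h d"
  by (simp add: rot_def)

lemma Tw_other: "d \<notin> set w \<Longrightarrow> Tw b w h d = h d"
  unfolding Tw_def by (induction w arbitrary: h) (auto simp: rot_other)

lemma Tw_snoc: "Tw b (w @ [c]) h = rot b c (Tw b w h)"
  by (simp add: Tw_def)

lemma Tw_Cons: "Tw b (c # w) h = Tw b w (rot b c h)"
  by (simp add: Tw_def)

definition st2 :: "(nat \<Rightarrow> real) \<Rightarrow> (nat \<Rightarrow> real) \<Rightarrow> nat \<Rightarrow> nat \<Rightarrow> (nat \<Rightarrow> nat) \<Rightarrow> real" where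
  "st2 P R i i' g = P (g i) + R (g i')"

lemma valid_Tw': "valid a b h \<Longrightarrow> set w \<subseteq> {1..a} \<Longrightarrow> valid a b (Tw b w h)"
  by (rule valid_Tw)

lemma SP_rotate:
  assumes sp: "SP a b (Tw b (w @ [c])) (st2 P R i i')" and cw: "c \<notin> set w"
    and sub: "set (c # w) \<subseteq> {1..a}"
  shows "SP a b (Tw b (c # w)) (st2 P R i i')"
proof (rule SP_transfer[where A = "Tw b w" and B = "rot b c"])
  define \<psi> where "\<psi> g = (if i = c then 0 else P (g i)) + (if i' = c then 0 else R (g i'))" for g
  show "SP a b (Tw b (w @ [c])) (\<lambda>h. st2 P R i i' (Tw b w h))"
  proof (rule SP_cob[OF sp])
    show "valid a b (Tw b (w @ [c]) h)" if "valid a b h" for h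
      using valid_Tw[OF that] sub by auto
    fix h assume "valid a b h"
    have e1: "Tw b w h c = h c" using Tw_other[OF cw] .
    have e2: "Tw b (w @ [c]) h d = Tw b w h d" if "d \<noteq> c" for d
      using that by (simp add: Tw_snoc rot_other)
    show "st2 P R i i' (Tw b w h) = st2 P R i i' h + (\<psi> (Tw b (w @ [c]) h) - \<psi> h)"
      unfolding st2_def \<psi>_def using e1 e2 by (cases "i = c"; cases "i' = c") auto
  qed
  show "\<And>h. Tw b (w @ [c]) h = rot b c (Tw b w h)" by (rule Tw_snoc)
  show "\<And>h. Tw b (c # w) h = Tw b w (rot b c h)" by (rule Tw_Cons)
  show "\<And>h. valid a b h \<Longrightarrow> valid a b (rot b c h)" using valid_rot sub by auto
qed

lemma rot_comm:
  assumes "x \<noteq> s" "x \<noteq> s + 1" "s \<noteq> x + 1"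
  shows "rot b s (rot b x h) = rot b x (rot b s h)"
proof -
  have "x - 1 \<noteq> s \<or> x = 1" using assms by auto
  moreover have "s - 1 \<noteq> x \<or> s = 1" using assms by auto
  ultimately show ?thesis using assms
    unfolding rot_def Up_def by (intro ext) (auto simp: fun_upd_def)
qed

lemma Tw_comm1:
  assumes "\<forall>x\<in>set u. x \<noteq> s \<and> x \<noteq> s + 1 \<and> s \<noteq> x + 1"
  shows "rot b s (Tw b u h) = Tw b u (rot b s h)"
  using assms unfolding Tw_def
proof (induction u arbitrary: h)
  case (Cons x u)
  have "rot b s (fold (rot b) (x # u) h) = fold (rot b) u (rot b s (rot b x h))"
    using Cons by simp
  also have "\<dots> = fold (rot b) u (rot b x (rot b s h))"
    using Cons.prems rot_comm[of x s b h] by simp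
  finally show ?case by simp
qed simp

lemma Tw_comm:
  assumes "\<forall>x\<in>set u. x \<noteq> s \<and> x \<noteq> s + 1 \<and> s \<noteq> x + 1"
  shows "Tw b (u @ s # v) = Tw b (s # u @ v)"
proof
  fix h
  have "Tw b (u @ s # v) h = Tw b v (rot b s (Tw b u h))" by (simp add: Tw_def)
  also have "\<dots> = Tw b v (Tw b u (rot b s h))" using Tw_comm1[OF assms] by simp
  also have "\<dots> = Tw b (s # u @ v) h" by (simp add: Tw_def)
  finally show "Tw b (u @ s # v) h = Tw b (s # u @ v) h" .
qed

definition N :: "nat \<Rightarrow> nat \<Rightarrow> (nat \<Rightarrow> nat) \<Rightarrow> nat \<Rightarrow> int" where
  "N a b h m = (\<Sum>c = 1..a. if b + c \<le> m + h c then 1 else 0)"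

lemma N_card: "N a b h m = int (card {c \<in> {1..a}. b + c \<le> m + h c})"
  unfolding N_def by (simp add: sum.inter_filter[symmetric])

lemma N_ge:
  assumes v: "valid a b h" and i: "1 \<le> i" "i \<le> a"
  shows "int i \<le> N a b h m \<longleftrightarrow> b + i \<le> m + h i"
proof -
  define S where "S = {c \<in> {1..a}. b + c \<le> m + h c}"
  have sub: "S \<subseteq> {1..a}" by (auto simp: S_def)
  have dc: "\<forall>x\<in>S. \<forall>y. 1 \<le> y \<longrightarrow> y \<le> x \<longrightarrow> y \<in> S"
  proof (intro ballI allI impI)
    fix x y assume x: "x \<in> S" and y: "1 \<le> y" "y \<le> x"
    then have "h x \<le> h y" using validDm[OF v, of y x] by (auto simp: S_def)
    then show "y \<in> S" using x y by (auto simp: S_def)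
  qed
  have Seq: "S = {1..card S}" using dc_interval[OF sub dc] .
  have "i \<in> S \<longleftrightarrow> i \<le> card S"
  proof -
    have "i \<in> {1..card S} \<longleftrightarrow> i \<le> card S" using i by simp
    then show ?thesis using Seq by blast
  qed
  moreover have "i \<in> S \<longleftrightarrow> b + i \<le> m + h i" using i by (simp add: S_def)
  moreover have "N a b h m = int (card S)" by (simp add: N_card S_def)
  ultimately show ?thesis by simp
qed

lemma N_zero: assumes v: "valid a b h" shows "N a b h 0 = 0"
  unfolding N_def
proof (intro sum.neutral ballI)
  fix c assume c: "c \<in> {1..a}"
  have "h c \<le> b" using validDb[OF v] .
  then have "\<not> b + c \<le> 0 + h c" using c by simp
  then show "(if b + c \<le> 0 + h c then 1 else 0) = (0::int)" by simp
qed

lemma N_full: "N a b h (a + b) = int a"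
proof -
  have "N a b h (a + b) = (\<Sum>c = 1..a. (1::int))"
    unfolding N_def by (rule sum.cong) auto
  then show ?thesis by simp
qed

lemma N_one: "valid a b h \<Longrightarrow> 1 \<le> a \<Longrightarrow> N a b h 1 = (if h 1 = b then 1 else 0)"
proof -
  assume v: "valid a b h" and a: "1 \<le> a"
  have "N a b h 1 = (\<Sum>c = 1..a. if c = 1 then (if h 1 = b then 1 else 0) else 0)"
    unfolding N_def
  proof (rule sum.cong)
    fix c assume c: "c \<in> {1..a}"
    have "h c \<le> b" using validDb[OF v] .
    then show "(if b + c \<le> 1 + h c then 1 else 0) = (if c = 1 then (if h 1 = b then 1 else 0) else (0::int))"
      using c by auto
  qed simp
  then show ?thesis using a by simp
qed

definition T0 :: "nat \<Rightarrow> nat \<Rightarrow> (nat \<Rightarrow> nat) \<Rightarrow> (nat \<Rightarrow> nat)" where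
  "T0 a b = Tw b [1..<a+1]"

lemma T0_inc_pre:
  assumes v: "valid a b h" and h1: "h 1 < b"
  shows "m \<le> a \<Longrightarrow> fold (rot b) [1..<m+1] h = (\<lambda>c. if 1 \<le> c \<and> c \<le> m then h c + 1 else h c)"
proof (induction m)
  case 0 then show ?case by (auto intro!: ext)
next
  case (Suc m)
  define g where "g = (\<lambda>c. if 1 \<le> c \<and> c \<le> m then h c + 1 else h c)"
  have IH: "fold (rot b) [1..<m+1] h = g" using Suc by (simp add: g_def)
  have "[1..<Suc m + 1] = [1..<m+1] @ [m+1]" by simp
  then have "fold (rot b) [1..<Suc m+1] h = rot b (m+1) (fold (rot b) [1..<m+1] h)" by (simp del: upt_Suc)
  then have F: "fold (rot b) [1..<Suc m+1] h = rot b (m+1) g" using IH by simp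
  moreover have "g (m+1) < Up b g (m+1)"
  proof (cases "m = 0")
    case True then show ?thesis using h1 by (simp add: g_def Up_def)
  next
    case False
    then have "h (m+1) \<le> h m" using validDm[OF v, of m "m+1"] Suc by simp
    then show ?thesis using False by (simp add: g_def Up_def)
  qed
  then show ?case unfolding F by (auto simp: rot_def g_def intro!: ext)
qed

lemma T0_shift_pre:
  assumes v: "valid a b h" and h1: "h 1 = b"
  shows "m \<le> a \<Longrightarrow> fold (rot b) [1..<m+1] h = (\<lambda>c. if 1 \<le> c \<and> c \<le> m then h (c + 1) else h c)"
proof (induction m)
  case 0 then show ?case by (auto intro!: ext)
next
  case (Suc m)
  define g where "g = (\<lambda>c. if 1 \<le> c \<and> c \<le> m then h (c + 1) else h c)"
  have IH: "fold (rot b) [1..<m+1] h = g" using Suc by (simp add: g_def)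
  have "[1..<Suc m + 1] = [1..<m+1] @ [m+1]" by simp
  then have "fold (rot b) [1..<Suc m+1] h = rot b (m+1) (fold (rot b) [1..<m+1] h)" by (simp del: upt_Suc)
  then have F: "fold (rot b) [1..<Suc m+1] h = rot b (m+1) g" using IH by simp
  moreover have "\<not> g (m+1) < Up b g (m+1)"
  proof (cases "m = 0")
    case True then show ?thesis using h1 by (simp add: g_def Up_def)
  next
    case False
    then show ?thesis by (simp add: g_def Up_def)
  qed
  then show ?case unfolding F by (auto simp: rot_def g_def intro!: ext)
qed

lemma T0_inc:
  assumes v: "valid a b h" and h1: "h 1 < b"
  shows "T0 a b h = (\<lambda>c. if 1 \<le> c \<and> c \<le> a then h c + 1 else h c)"
  using T0_inc_pre[OF v h1, of a] by (simp add: T0_def Tw_def)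

lemma T0_shift:
  assumes v: "valid a b h" and h1: "h 1 = b"
  shows "T0 a b h = (\<lambda>c. if 1 \<le> c \<and> c \<le> a then h (c + 1) else h c)"
  using T0_shift_pre[OF v h1, of a] by (simp add: T0_def Tw_def)

lemma valid_T0: "valid a b h \<Longrightarrow> valid a b (T0 a b h)"
  unfolding T0_def by (rule valid_Tw) auto

lemma N_T0:
  assumes v: "valid a b h" and a: "1 \<le> a" and m: "m + 1 \<le> a + b"
  shows "N a b (T0 a b h) m = N a b h (m+1) - N a b h 1"
proof (cases "h 1 < b")
  case True
  have "N a b (T0 a b h) m = N a b h (m+1)"
    unfolding N_def T0_inc[OF v True] by (rule sum.cong) auto
  then show ?thesis using N_one[OF v a] True by simp
next
  case False
  then have h1: "h 1 = b" using validDb[OF v, of 1] by simp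
  obtain a' where a': "a = Suc a'" using a by (cases a) auto
  define G where "G c = (if b + c \<le> m + h (c+1) then 1 else (0::int))" for c
  have "N a b (T0 a b h) m = (\<Sum>c = 1..a. G c)"
    unfolding N_def T0_shift[OF v h1] G_def by (rule sum.cong) auto
  also have "\<dots> = (\<Sum>c = 1..a'. G c) + G a" using a' by (simp add: sum.cl_ivl_Suc)
  also have "G a = 0" using m validDa[OF v, of "a+1"] by (simp add: G_def)
  finally have L: "N a b (T0 a b h) m = (\<Sum>c = 1..a'. G c)" by simp
  have "N a b h (m+1) = (if b + 1 \<le> m + 1 + h 1 then 1 else 0) + (\<Sum>c = Suc 1..Suc a'. if b + c \<le> m + 1 + h c then 1 else 0)"
    unfolding N_def using a' by (simp add: sum.atLeast_Suc_atMost)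
  also have "(\<Sum>c = Suc 1..Suc a'. if b + c \<le> m + 1 + h c then 1 else (0::int)) = (\<Sum>c = 1..a'. G c)"
    unfolding sum.shift_bounds_cl_Suc_ivl G_def by (rule sum.cong) auto
  finally have "N a b h (m+1) = 1 + (\<Sum>c = 1..a'. G c)" using h1 by simp
  then show ?thesis using L N_one[OF v a] h1 by simp
qed

lemma N_iter:
  assumes a: "1 \<le> a"
  shows "valid a b h \<Longrightarrow> m + k \<le> a + b \<Longrightarrow> N a b ((T0 a b ^^ k) h) m = N a b h (m+k) - N a b h k"
proof (induction k arbitrary: h)
  case 0 then show ?case using N_zero by simp
next
  case (Suc k)
  have vT: "valid a b (T0 a b h)" using valid_T0[OF Suc(2)] .
  have "N a b ((T0 a b ^^ Suc k) h) m = N a b ((T0 a b ^^ k) (T0 a b h)) m"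
    by (simp only: funpow_Suc_right comp_apply)
  also have "\<dots> = N a b (T0 a b h) (m+k) - N a b (T0 a b h) k" using Suc.IH[OF vT] Suc(3) by simp
  also have "\<dots> = N a b h (m + Suc k) - N a b h (Suc k)"
    using N_T0[OF Suc(2) a, of "m+k"] N_T0[OF Suc(2) a, of k] Suc(3) by simp
  finally show ?case .
qed

lemma key_identity:
  assumes v: "valid a b h" and i: "1 \<le> i" "i \<le> a" and j: "1 \<le> j" "j \<le> b"
  shows "(b + 1 - j \<le> ((T0 a b ^^ (i + b - j)) h) (a + 1 - i)) \<longleftrightarrow> \<not> (j \<le> h i)"
proof -
  define K where "K = i + b - j"
  define g where "g = (T0 a b ^^ K) h"
  have vg: "valid a b g" unfolding g_def by (induction K) (auto simp: v valid_T0)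
  define m where "m = a + j - i"
  have a1: "1 \<le> a" using i by simp
  have i': "1 \<le> a + 1 - i" "a + 1 - i \<le> a" using i by auto
  have mK: "m + K = a + b" using i j by (simp add: m_def K_def)
  have "(b + 1 - j \<le> g (a + 1 - i)) \<longleftrightarrow> (b + (a + 1 - i) \<le> m + g (a + 1 - i))"
    using i j by (simp add: m_def) arith
  also have "\<dots> \<longleftrightarrow> int (a + 1 - i) \<le> N a b g m" using N_ge[OF vg i'] by simp
  also have "N a b g m = int a - N a b h K"
    using N_iter[OF a1 v, of m K] mK N_full[of a b h] by (simp add: g_def)
  also have "(int (a + 1 - i) \<le> int a - N a b h K) \<longleftrightarrow> \<not> (int i \<le> N a b h K)" using i by auto
  also have "(int i \<le> N a b h K) \<longleftrightarrow> b + i \<le> K + h i" using N_ge[OF v i] .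
  also have "(b + i \<le> K + h i) \<longleftrightarrow> j \<le> h i" using j by (simp add: K_def) arith
  finally show ?thesis by (simp add: g_def K_def)
qed

definition Pst :: "nat \<Rightarrow> nat \<Rightarrow> real" where "Pst j x = (if j \<le> x then 1 else 0)"
definition Rst :: "nat \<Rightarrow> nat \<Rightarrow> nat \<Rightarrow> real" where "Rst b j x = (if b + 1 - j \<le> x then 1 else 0) - 1"

lemma SP_base:
  assumes i: "1 \<le> i" "i \<le> a" and j: "1 \<le> j" "j \<le> b"
  shows "SP a b (T0 a b) (st2 (Pst j) (Rst b j) i (a + 1 - i))"
  unfolding SP_def
proof (intro allI impI)
  fix h n assume v: "valid a b h" and per: "(T0 a b ^^ n) h = h"
  define K where "K = i + b - j"
  define \<phi> where "\<phi> g = Pst j (g i)" for g :: "nat \<Rightarrow> nat"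
  have vk: "valid a b ((T0 a b ^^ k) h)" for k by (induction k) (auto simp: v valid_T0)
  have st: "st2 (Pst j) (Rst b j) i (a + 1 - i) ((T0 a b ^^ K) g) = \<phi> ((T0 a b ^^ K) g) - \<phi> g"
    if vg: "valid a b g" for g
    using key_identity[OF vg i j] by (simp add: st2_def \<phi>_def Pst_def Rst_def K_def)
  have "(\<Sum>k<n. st2 (Pst j) (Rst b j) i (a + 1 - i) ((T0 a b ^^ k) h))
      = (\<Sum>k<n. st2 (Pst j) (Rst b j) i (a + 1 - i) ((T0 a b ^^ (k + K)) h))"
    using orbit_shift[OF per, of _ K] by simp
  also have "\<dots> = (\<Sum>k<n. \<phi> ((T0 a b ^^ (k + K)) h) - \<phi> ((T0 a b ^^ k) h))"
  proof (rule sum.cong)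
    fix k
    have "(T0 a b ^^ (k + K)) h = (T0 a b ^^ K) ((T0 a b ^^ k) h)"
      by (simp add: funpow_add add.commute)
    then show "st2 (Pst j) (Rst b j) i (a + 1 - i) ((T0 a b ^^ (k + K)) h) = \<phi> ((T0 a b ^^ (k + K)) h) - \<phi> ((T0 a b ^^ k) h)"
      using st[OF vk[of k]] by simp
  qed simp
  also have "\<dots> = 0"
    using orbit_shift[OF per, of \<phi> K] by (simp add: sum_subtractf)
  finally show "(\<Sum>k<n. st2 (Pst j) (Rst b j) i (a + 1 - i) ((T0 a b ^^ k) h)) = 0" .
qed

fun idx :: "'a list \<Rightarrow> 'a \<Rightarrow> nat" where
  "idx [] x = 0"
| "idx (y # ys) x = (if x = y then 0 else Suc (idx ys x))"

lemma idx_append: "idx (xs @ ys) x = (if x \<in> set xs then idx xs x else length xs + idx ys x)"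
  by (induction xs) auto

lemma idx_lt: "x \<in> set xs \<Longrightarrow> idx xs x < length xs"
  by (induction xs) auto

lemma nth_idx: "x \<in> set xs \<Longrightarrow> xs ! idx xs x = x"
  by (induction xs) auto

lemma idx_nth: "distinct xs \<Longrightarrow> i < length xs \<Longrightarrow> idx xs (xs ! i) = i"
proof (induction xs arbitrary: i)
  case (Cons y ys)
  then show ?case by (cases i) (auto simp: nth_mem)
qed simp

lemma idx_eq: "x \<in> set xs \<Longrightarrow> y \<in> set xs \<Longrightarrow> idx xs x = idx xs y \<Longrightarrow> x = y"
  by (metis nth_idx)

definition Phi :: "nat \<Rightarrow> nat list \<Rightarrow> nat" where
  "Phi a w = (\<Sum>c\<in>{1..<a}. if idx w (c+1) < idx w c then a - c else 0)"

lemma sorted_case: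
  assumes d: "distinct w" and sw: "set w = {1..a}"
    and inc: "\<And>c. 1 \<le> c \<Longrightarrow> c < a \<Longrightarrow> idx w c < idx w (c+1)"
  shows "w = [1..<a+1]"
proof -
  have mono: "idx w x < idx w y" if "1 \<le> x" "x < y" "y \<le> a" for x y
    using that
  proof (induction y)
    case 0 then show ?case by simp
  next
    case (Suc y)
    show ?case
    proof (cases "x = y")
      case True then show ?thesis using inc[of x] Suc.prems by simp
    next
      case False
      then have "idx w x < idx w y" using Suc by simp
      also have "idx w y < idx w (Suc y)" using inc[of y] Suc.prems False by simp
      finally show ?thesis .
    qed
  qed
  have "sorted w"
    unfolding sorted_iff_nth_mono_less
  proof (intro allI impI)
    fix i j assume ij: "i < j" "j < length w"
    show "w ! i \<le> w ! j"
    proof (rule ccontr)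
      assume "\<not> w ! i \<le> w ! j"
      then have lt: "w ! j < w ! i" by simp
      have "w ! i \<in> {1..a}" "w ! j \<in> {1..a}" using ij sw nth_mem[of i w] nth_mem[of j w] by auto
      then have "idx w (w ! j) < idx w (w ! i)" using mono lt by auto
      then show False using idx_nth[OF d, of i] idx_nth[OF d, of j] ij by simp
    qed
  qed
  moreover have "set [1..<a+1] = {1..a}" by auto
  moreover have "sorted [1..<a+1]" by (rule sorted_upt)
  moreover have "distinct [1..<a+1]" by (rule distinct_upt)
  ultimately show ?thesis using d sw sorted_distinct_set_unique[of w "[1..<a+1]"] by simp
qed

lemma all_perms:
  assumes base: "Qp [1..<a+1]"
    and rotate: "\<And>w c. distinct (c # w) \<Longrightarrow> set (c # w) = {1..a} \<Longrightarrow> Qp (w @ [c]) \<Longrightarrow> Qp (c # w)"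
    and comm: "\<And>u s v. (\<forall>x\<in>set u. x \<noteq> s \<and> x \<noteq> s + 1 \<and> s \<noteq> x + 1) \<Longrightarrow> Qp (s # u @ v) \<Longrightarrow> Qp (u @ s # v)"
  shows "distinct w \<Longrightarrow> set w = {1..a} \<Longrightarrow> Qp w"
proof (induction "Phi a w" arbitrary: w rule: less_induct)
  case less
  note d = less.prems(1) and sw = less.prems(2)
  define B where "B = {c \<in> {1..<a}. idx w (c+1) < idx w c}"
  show ?case
  proof (cases "B = {}")
    case True
    have "w = [1..<a+1]"
    proof (rule sorted_case[OF d sw])
      fix c assume c: "1 \<le> c" "c < a"
      then have "\<not> idx w (c+1) < idx w c" using True by (auto simp: B_def)
      moreover have "idx w c \<noteq> idx w (c+1)"
      proof
        assume "idx w c = idx w (c+1)"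
        then have "c = c + 1" using idx_eq[of c w "c+1"] sw c by auto
        then show False by simp
      qed
      ultimately show "idx w c < idx w (c+1)" by simp
    qed
    then show ?thesis using base by simp
  next
    case False
    have finB: "finite B" by (simp add: B_def)
    define c0 where "c0 = Max B"
    have c0B: "c0 \<in> B" using Max_in[OF finB False] by (simp add: c0_def)
    have c0max: "\<And>c. c \<in> B \<Longrightarrow> c \<le> c0" using Max_ge[OF finB] by (simp add: c0_def)
    define s where "s = c0 + 1"
    have c0r: "1 \<le> c0" "c0 < a" using c0B by (auto simp: B_def)
    have sr: "2 \<le> s" "s \<le> a" using c0r by (auto simp: s_def)
    have sw': "s \<in> set w" "c0 \<in> set w" using sw sr c0r by auto
    have bad: "idx w s < idx w c0" using c0B by (simp add: B_def s_def)
    have good: "idx w s < idx w (s+1)" if "s < a"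
    proof -
      have "s \<notin> B" using c0max[of s] by (auto simp: s_def)
      then have "\<not> idx w (s+1) < idx w s" using that sr by (auto simp: B_def)
      moreover have "idx w s \<noteq> idx w (s+1)"
      proof
        assume "idx w s = idx w (s+1)"
        then have "s = s + 1" using idx_eq[of s w "s+1"] sw sr that by auto
        then show False by simp
      qed
      ultimately show ?thesis by simp
    qed
    define p where "p = idx w s"
    define u where "u = take p w"
    define v where "v = drop (Suc p) w"
    have wsplit: "w = u @ s # v"
      using id_take_nth_drop[of p w] idx_lt[OF sw'(1)] nth_idx[OF sw'(1)] by (simp add: u_def v_def p_def)
    have su: "s \<notin> set u" "s \<notin> set v" using d wsplit by auto
    have lu: "length u = p" using idx_lt[OF sw'(1)] by (simp add: u_def p_def)
    have idxw: "idx w x = (if x \<in> set u then idx u x else if x = s then length u else length u + 1 + idx v x)" for x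
      using su by (subst wsplit) (simp add: idx_append)
    define w' where "w' = u @ v @ [s]"
    have idxw': "idx w' x = (if x \<in> set u then idx u x else if x \<in> set v then length u + idx v x else length u + length v)"
      if "x \<in> set u \<or> x \<in> set v \<or> x = s" for x
      using that su by (auto simp: w'_def idx_append)
    have du: "distinct (u @ v)" and dw': "distinct (s # (u @ v))" using d wsplit by auto
    have sw2: "set (s # (u @ v)) = {1..a}" using sw wsplit by auto
    have dw'': "distinct w'" using dw' by (auto simp: w'_def)
    have sw3: "set w' = {1..a}" using sw2 by (auto simp: w'_def)
    have uless: "idx u x < length u" if "x \<in> set u" for x using idx_lt[OF that] .
    have same: "idx w' x < idx w' y \<longleftrightarrow> idx w x < idx w y" if "x \<in> set w" "y \<in> set w" "x \<noteq> s" "y \<noteq> s" for x y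
    proof -
      have x: "x \<in> set u \<or> x \<in> set v" and y: "y \<in> set u \<or> y \<in> set v" using that wsplit by auto
      show ?thesis using x y uless[of x] uless[of y] idxw'[of x] idxw'[of y] that su by (auto simp: idxw)
    qed
    have slast: "idx w' x < idx w' s" if "x \<in> set w" "x \<noteq> s" for x
    proof -
      have "x \<in> set u \<or> x \<in> set v" using that wsplit by auto
      then show ?thesis using uless[of x] idx_lt[of x v] su idxw'[of x] idxw'[of s] by auto
    qed
    define t where "t c = (if idx w (c+1) < idx w c then a - c else 0)" for c
    define t' where "t' c = (if idx w' (c+1) < idx w' c then a - c else 0)" for c
    have pw: "t' c + (if c = c0 then t c else 0) = t c + (if c = s then t' c else 0)" if c: "c \<in> {1..<a}" for c
    proof -
      have cin: "c \<in> set w" "c + 1 \<in> set w" using c sw by auto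
      consider "c = c0" | "c = s" | "c \<noteq> c0" "c \<noteq> s" by blast
      then show ?thesis
      proof cases
        case 1
        have "t' c = 0" using slast[of c] cin 1 by (simp add: t'_def s_def)
        then show ?thesis using 1 by (simp add: s_def)
      next
        case 2
        have "t c = 0" using good[of] c 2 by (simp add: t_def)
        then show ?thesis using 2 by (simp add: s_def)
      next
        case 3
        have "c + 1 \<noteq> s" using 3 by (simp add: s_def)
        then have "t' c = t c" using same[of "c+1" c] cin 3 by (simp add: t_def t'_def)
        then show ?thesis using 3 by simp
      qed
    qed
    have "(\<Sum>c\<in>{1..<a}. t' c + (if c = c0 then t c else 0)) = (\<Sum>c\<in>{1..<a}. t c + (if c = s then t' c else 0))"
      using pw by (rule sum.cong[OF refl])
    then have eq: "Phi a w' + t c0 = Phi a w + (if s \<in> {1..<a} then t' s else 0)"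
      using c0r by (simp add: sum.distrib Phi_def t_def t'_def)
    have tc0: "t c0 = a - c0" using bad by (simp add: t_def s_def)
    have "t' s \<le> a - s" by (simp add: t'_def)
    then have "Phi a w' < Phi a w" using eq tc0 c0r by (simp add: s_def split: if_splits)
    then have "Qp w'" using less.hyps dw'' sw3 by blast
    then have "Qp (s # (u @ v))" using rotate[OF dw' sw2] by (simp add: w'_def)
    moreover have "\<forall>x\<in>set u. x \<noteq> s \<and> x \<noteq> s + 1 \<and> s \<noteq> x + 1"
    proof
      fix x assume xu: "x \<in> set u"
      have "x \<noteq> s" using xu su by auto
      moreover have "x \<noteq> s + 1"
      proof
        assume xs: "x = s + 1"
        have "x \<in> set w" using xu wsplit by simp
        then have "x \<le> a" using sw by auto
        then have "s < a" using xs by simp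
        then have "idx w s < idx w x" using good xs by simp
        moreover have "idx w x < idx w s" using xu uless[of x] su by (simp add: idxw)
        ultimately show False by simp
      qed
      moreover have "s \<noteq> x + 1"
      proof
        assume "s = x + 1"
        then have "x = c0" by (simp add: s_def)
        then have "idx w s < idx w x" using bad by simp
        moreover have "idx w x < idx w s" using xu uless[of x] su by (simp add: idxw)
        ultimately show False by simp
      qed
      ultimately show "x \<noteq> s \<and> x \<noteq> s + 1 \<and> s \<noteq> x + 1" by simp
    qed
    ultimately show ?thesis using comm wsplit by simp
  qed
qed

lemma rot_inj:
  assumes vh: "valid a b h" and vg: "valid a b g" and c: "1 \<le> c" "c \<le> a"
    and eq: "rot b c h = rot b c g"
  shows "h = g"
proof -
  have oth: "h d = g d" if "d \<noteq> c" for d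
    using fun_cong[OF eq, of d] that by (simp add: rot_other)
  have U: "Up b h c = Up b g c" using oth c by (simp add: Up_def)
  have L: "h (c+1) = g (c+1)" using oth by simp
  have hr: "h (c+1) \<le> h c" "h c \<le> Up b h c" using lo_le[OF vh c] Up_ge[OF vh c] by auto
  have gr: "g (c+1) \<le> g c" "g c \<le> Up b g c" using lo_le[OF vg c] Up_ge[OF vg c] by auto
  have ec: "(if h c < Up b h c then h c + 1 else h (c+1)) = (if g c < Up b g c then g c + 1 else g (c+1))"
    using fun_cong[OF eq, of c] by (simp add: rot_def)
  have "h c = g c"
    using ec U L hr gr by (auto split: if_splits)
  then show ?thesis using oth by (intro ext) (case_tac "x = c"; simp)
qed

lemma Tw_inj:
  "valid a b h \<Longrightarrow> valid a b g \<Longrightarrow> set w \<subseteq> {1..a} \<Longrightarrow> Tw b w h = Tw b w g \<Longrightarrow> h = g"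
proof (induction w arbitrary: h g)
  case Nil then show ?case by (simp add: Tw_def)
next
  case (Cons c w)
  have c: "1 \<le> c" "c \<le> a" using Cons.prems(3) by auto
  have "rot b c h = rot b c g"
    using Cons.IH[OF valid_rot[OF Cons.prems(1) c] valid_rot[OF Cons.prems(2) c]] Cons.prems(3,4)
    by (simp add: Tw_Cons)
  then show ?case using rot_inj[OF Cons.prems(1,2) c] by simp
qed

lemma funpow_inj:
  assumes inj: "inj_on T V" and pres: "\<forall>x\<in>V. T x \<in> V"
  shows "inj_on (T ^^ n) V"
proof (induction n)
  case 0 then show ?case by simp
next
  case (Suc n)
  have img: "(T ^^ n) ` V \<subseteq> V"
  proof (induction n)
    case (Suc n) then show ?case using pres by auto
  qed simp
  show ?case using comp_inj_on[OF Suc inj_on_subset[OF inj img]] by (simp add: comp_def)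
qed

lemma funpow_pres:
  assumes pres: "\<forall>x\<in>V. T x \<in> V" and "h \<in> V"
  shows "(T ^^ n) h \<in> V"
  by (induction n) (use assms in auto)

lemma period_exists:
  assumes fin: "finite V" and inj: "inj_on T V" and pres: "\<forall>x\<in>V. T x \<in> V" and hV: "h \<in> V"
  shows "\<exists>p>0. (T ^^ p) h = h"
proof -
  define f where "f k = (T ^^ k) h" for k
  have img: "f ` {..card V} \<subseteq> V" using funpow_pres[OF pres hV] by (auto simp: f_def)
  have "\<not> inj_on f {..card V}"
  proof
    assume "inj_on f {..card V}"
    then have "card {..card V} \<le> card V" using card_inj_on_le[OF _ img fin] by simp
    then show False by simp
  qed
  then obtain i j where ij: "i \<noteq> j" "f i = f j" unfolding inj_on_def by blast
  have "\<exists>i j. i < j \<and> f i = f j"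
  proof (cases "i < j")
    case True then show ?thesis using ij by blast
  next
    case False then have "j < i" using ij by simp
    then show ?thesis using ij by metis
  qed
  then obtain i j where ij: "i < j" "f i = f j" by blast
  have "(T ^^ i) ((T ^^ (j - i)) h) = (T ^^ i) h"
  proof -
    have "(T ^^ j) h = (T ^^ i) ((T ^^ (j - i)) h)"
      using ij(1) funpow_add[of i "j - i" T] by simp
    then show ?thesis using ij(2) by (simp add: f_def)
  qed
  then have "(T ^^ (j - i)) h = h"
    using funpow_inj[OF inj pres, of i] funpow_pres[OF pres hV] hV unfolding inj_on_def by blast
  then show ?thesis using ij(1) by (intro exI[of _ "j - i"]) simp
qed

lemma funpow_period_mult: "(T ^^ p) h = h \<Longrightarrow> (T ^^ (q * p)) h = h"
proof (induction q)
  case (Suc q)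
  have "(T ^^ (Suc q * p)) h = (T ^^ p) ((T ^^ (q * p)) h)"
    by (simp add: funpow_add)
  then show ?case using Suc by simp
qed simp

lemma funpow_mod: "(T ^^ p) h = h \<Longrightarrow> (T ^^ k) h = (T ^^ (k mod p)) h"
proof -
  assume per: "(T ^^ p) h = h"
  have "(T ^^ k) h = (T ^^ (k mod p + (k div p) * p)) h" by simp
  also have "\<dots> = (T ^^ (k mod p)) ((T ^^ ((k div p) * p)) h)" by (simp only: funpow_add comp_apply)
  also have "\<dots> = (T ^^ (k mod p)) h" using funpow_period_mult[OF per] by simp
  finally show ?thesis .
qed

lemma orbit_sum:
  fixes F :: "'s \<Rightarrow> real"
  assumes fin: "finite V" and inj: "inj_on T V" and pres: "\<forall>x\<in>V. T x \<in> V" and hV: "h \<in> V"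
    and sp: "\<And>n. (T ^^ n) h = h \<Longrightarrow> (\<Sum>k<n. F ((T ^^ k) h)) = 0"
    and injH: "inj_on H V" and GF: "\<And>g. g \<in> V \<Longrightarrow> G (H g) = F g"
  shows "(\<Sum>t\<in>{H ((T ^^ k) h) | k. True}. G t) = 0"
proof -
  define p where "p = (LEAST p. 0 < p \<and> (T ^^ p) h = h)"
  have ex: "\<exists>p. 0 < p \<and> (T ^^ p) h = h" using period_exists[OF fin inj pres hV] by blast
  have pp: "0 < p" "(T ^^ p) h = h" using LeastI_ex[OF ex] by (auto simp: p_def)
  have pmin: "\<And>q. 0 < q \<Longrightarrow> q < p \<Longrightarrow> (T ^^ q) h \<noteq> h"
    using not_less_Least by (auto simp: p_def)
  have orb: "{H ((T ^^ k) h) | k. True} = (\<lambda>k. H ((T ^^ k) h)) ` {..<p}"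
  proof
    show "{H ((T ^^ k) h) | k. True} \<subseteq> (\<lambda>k. H ((T ^^ k) h)) ` {..<p}"
    proof
      fix t assume "t \<in> {H ((T ^^ k) h) | k. True}"
      then obtain k where t: "t = H ((T ^^ k) h)" by blast
      have "(T ^^ k) h = (T ^^ (k mod p)) h" using funpow_mod[OF pp(2)] .
      moreover have "k mod p < p" using pp(1) by simp
      ultimately show "t \<in> (\<lambda>k. H ((T ^^ k) h)) ` {..<p}" using t by auto
    qed
  qed auto
  have injk: "inj_on (\<lambda>k. (T ^^ k) h) {..<p}"
  proof (rule inj_onI)
    fix i j assume i: "i \<in> {..<p}" and j: "j \<in> {..<p}" and e: "(T ^^ i) h = (T ^^ j) h"
    show "i = j"
    proof (rule ccontr)
      assume "i \<noteq> j"
      then consider "i < j" | "j < i" by linarith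
      then show False
      proof cases
        case 1
        have "(T ^^ i) ((T ^^ (j - i)) h) = (T ^^ i) h"
          using e 1 funpow_add[of i "j - i" T] by simp
        then have "(T ^^ (j - i)) h = h"
          using funpow_inj[OF inj pres, of i] funpow_pres[OF pres hV] hV unfolding inj_on_def by blast
        moreover have "0 < j - i" "j - i < p" using 1 j by auto
        ultimately show False using pmin by blast
      next
        case 2
        have "(T ^^ j) ((T ^^ (i - j)) h) = (T ^^ j) h"
          using e 2 funpow_add[of j "i - j" T] by simp
        then have "(T ^^ (i - j)) h = h"
          using funpow_inj[OF inj pres, of j] funpow_pres[OF pres hV] hV unfolding inj_on_def by blast
        moreover have "0 < i - j" "i - j < p" using 2 i by auto
        ultimately show False using pmin by blast
      qed
    qed
  qed
  have injHk: "inj_on (\<lambda>k. H ((T ^^ k) h)) {..<p}"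
  proof (rule comp_inj_on[OF injk, unfolded comp_def])
    show "inj_on H ((\<lambda>k. (T ^^ k) h) ` {..<p})"
      by (rule inj_on_subset[OF injH]) (use funpow_pres[OF pres hV] in auto)
  qed
  have "(\<Sum>t\<in>{H ((T ^^ k) h) | k. True}. G t) = (\<Sum>k<p. G (H ((T ^^ k) h)))"
    unfolding orb by (rule sum.reindex[OF injHk, unfolded comp_def])
  also have "\<dots> = (\<Sum>k<p. F ((T ^^ k) h))"
    using GF funpow_pres[OF pres hV] by simp
  also have "\<dots> = 0" using sp pp(2) by simp
  finally show ?thesis .
qed

lemma finite_valid: "finite {h. valid a b h}"
proof (rule finite_imageD)
  show "inj_on (hset a) {h. valid a b h}" using hset_inj by (auto simp: inj_on_def)
  have "hset a ` {h. valid a b h} \<subseteq> Pow (Q a b)"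
    using valid_ideal by (auto simp: is_ideal_def)
  moreover have "finite (Pow (Q a b))" by (simp add: Q_def)
  ultimately show "finite (hset a ` {h. valid a b h})" using finite_subset by blast
qed

theorem mainTheorem11:
  fixes a b :: nat and nu :: "nat \<Rightarrow> nat" and x :: "nat \<times> nat"
  assumes "a \<ge> 1" and "b \<ge> 1"
    and "nu permutes {1..a}"
    and "x \<in> Q a b"
  shows "zero_mesic (comotion a b nu) (J a b)
           (\<lambda>I. ind I x - (1 - ind I (antipode a b x)))"
proof -
  obtain i j where x: "x = (i,j)" by (cases x)
  have i: "1 \<le> i" "i \<le> a" and j: "1 \<le> j" "j \<le> b" using assms(4) x by (auto simp: Q_def)
  define w where "w = map nu [1..<a+1]"
  have nuimg: "nu ` {1..a} = {1..a}" using permutes_image[OF assms(3)] .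
  have dw: "distinct w" unfolding w_def distinct_map
    using permutes_inj_on[OF assms(3)] by (auto simp: atLeastLessThanSuc_atLeastAtMost)
  have su: "set [1..<a+1] = {1..a}" by auto
  have sw: "set w = {1..a}" using nuimg by (simp only: w_def set_map su)
  define st where "st = st2 (Pst j) (Rst b j) i (a + 1 - i)"
  have SPw: "SP a b (Tw b w) st"
    unfolding st_def
  proof (rule all_perms[where Qp = "\<lambda>w. SP a b (Tw b w) (st2 (Pst j) (Rst b j) i (a + 1 - i))", OF _ _ _ dw sw])
    show "SP a b (Tw b [1..<a+1]) (st2 (Pst j) (Rst b j) i (a + 1 - i))"
      using SP_base[OF i j] by (simp add: T0_def)
    fix w c assume d: "distinct (c # w)" and s: "set (c # w) = {1..a}"
      and sp: "SP a b (Tw b (w @ [c])) (st2 (Pst j) (Rst b j) i (a + 1 - i))"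
    show "SP a b (Tw b (c # w)) (st2 (Pst j) (Rst b j) i (a + 1 - i))"
      by (rule SP_rotate[OF sp]) (use d s in auto)
  next
    fix u s v assume "\<forall>x\<in>set u. x \<noteq> s \<and> x \<noteq> s + 1 \<and> s \<noteq> x + 1"
      and "SP a b (Tw b (s # u @ v)) (st2 (Pst j) (Rst b j) i (a + 1 - i))"
    then show "SP a b (Tw b (u @ s # v)) (st2 (Pst j) (Rst b j) i (a + 1 - i))"
      using Tw_comm by metis
  qed
  define T where "T = comotion a b nu"
  define Th where "Th = Tw b w"
  define V where "V = {h. valid a b h}"
  have presTh: "\<And>g. g \<in> V \<Longrightarrow> Th g \<in> V" using valid_Tw sw by (auto simp: V_def Th_def)
  have injTh: "inj_on Th V" using Tw_inj[of a b _ _ w] sw by (auto simp: inj_on_def V_def Th_def)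
  have Tstep: "T (hset a g) = hset a (Th g)" if "valid a b g" for g
    using comotion_hset[OF that] nuimg by (simp add: T_def Th_def w_def)
  have Fh: "ind (hset a g) x - (1 - ind (hset a g) (antipode a b x)) = st g" if "valid a b g" for g
  proof -
    have "a + 1 - i \<le> a" "1 \<le> a + 1 - i" "1 \<le> b + 1 - j" using i j by auto
    then show ?thesis using i j by (simp add: x ind_def antipode_def st_def st2_def Pst_def Rst_def)
  qed
  show ?thesis
    unfolding zero_mesic_def
  proof
    fix s assume "s \<in> J a b"
    then have "is_ideal a b s" by (simp add: J_def)
    then obtain h where v: "valid a b h" and sh: "s = hset a h" using ideal_hset by blast
    have iter: "(T ^^ k) s = hset a ((Th ^^ k) h)" for k
    proof (induction k)
      case (Suc k)
      have "(Th ^^ k) h \<in> V" by (rule funpow_pres) (use presTh v in \<open>auto simp: V_def\<close>)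
      then have "valid a b ((Th ^^ k) h)" by (simp add: V_def)
      then show ?case using Suc Tstep by simp
    qed (simp add: sh)
    have "orbit_of T s = {hset a ((Th ^^ k) h) | k. True}"
      unfolding orbit_of_def iter ..
    moreover have "(\<Sum>t\<in>{hset a ((Th ^^ k) h) | k. True}. ind t x - (1 - ind t (antipode a b x))) = 0"
    proof (rule orbit_sum[where V = V and F = st])
      show "finite V" using finite_valid by (simp add: V_def)
      show "inj_on Th V" by (rule injTh)
      show "\<forall>g\<in>V. Th g \<in> V" using presTh by blast
      show "h \<in> V" using v by (simp add: V_def)
      show "\<And>n. (Th ^^ n) h = h \<Longrightarrow> (\<Sum>k<n. st ((Th ^^ k) h)) = 0"
        using SPw v unfolding SP_def Th_def by blast
      show "inj_on (hset a) V" using hset_inj by (auto simp: inj_on_def V_def)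
      show "\<And>g. g \<in> V \<Longrightarrow> ind (hset a g) x - (1 - ind (hset a g) (antipode a b x)) = st g"
        using Fh by (simp add: V_def)
    qed
    ultimately show "(\<Sum>t\<in>orbit_of (comotion a b nu) s. ind t x - (1 - ind t (antipode a b x))) /
        real (card (orbit_of (comotion a b nu) s)) = 0" by (simp add: T_def)
  qed
qed

end
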